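(* Let $m$ be a positive integer, $x$ a positive integer and $r\in\{0,\dots,m-1\}$. Define $y_0=(m+1)x+r$ and $y_n=\left\lfloor \frac{(m+1)y_{n-1}}{m}\right\rfloor$ for $n\ge1$. Then for every integer $n\ge 0$, $\left\lfloor \frac{y_n}{m+1}\right\rfloor = x_n(x,r)$ and $y_n\equiv r_n(x,r)\pmod{m+1}$; that is, $x_n(x,r)$ and $r_n(x,r)$ are the quotient and remainder of $y_n$ upon division by $m+1$.
   Context: Fix a positive integer $m$. The triangle $T_m$ is an array whose row $x$ ($x=1,2,\dots$) has $x$ entries, in columns $0,\dots,x-1$. Row $1$ is the single entry $1$. For $x>1$, row $x$ is obtained from row $x-1$ by rotating it cyclically left by $m$ positions (the entry in column $c$ of row $x-1$ moves to column $(c-m)\bmod(x-1)\in\{0,\dots,x-2\}$ of row $x$), then appending in column $x-1$ a new entry equal to $1$ plus the entry in column $0$ of row $x-1$. Entries are individual objects keeping their identity as they move. Tracking: for a positive integer $x$ and $r\in\{0,\dots,m-1\}$, follow the individual entry in row $x$, column $r\bmod x$. Let $(x_0,r_0),(x_1,r_1),\dots$ be the list, in strictly increasing lexicographic order, of all integer pairs $(y,c)$ with $y\ge x$, $0\le c\le m-1$, $(y,c)\ge (x,r)$ lexicographically, such that the tracked entry occupies column $c\bmod y$ of row $y$ (so $x_0=x$, $r_0=r$). Write $x_n(x,r)=x_n$, $r_n(x,r)=r_n$. *)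

theory Defs
  imports Main "HOL-Library.Product_Lexorder" "HOL-Library.Infinite_Set"
begin

text \<open>Column (in row x + k) of the entry of T_m that sits in row x, column r mod x.
  Passing from row y to row y+1 the entry in column c moves to column (c - m) mod y;
  entries are never deleted, so the tracked entry lives in every later row.\<close>
fun track_col :: "nat \<Rightarrow> nat \<Rightarrow> nat \<Rightarrow> nat \<Rightarrow> int" where
  "track_col m x r 0 = int (r mod x)"
| "track_col m x r (Suc k) = (track_col m x r k - int m) mod int (x + k)"

definition track_set :: "nat \<Rightarrow> nat \<Rightarrow> nat \<Rightarrow> (nat \<times> nat) set" where
  "track_set m x r = {(y, c). x \<le> y \<and> c < m \<and> (x, r) \<le> (y, c) \<and>
      track_col m x r (y - x) = int (c mod y)}"

definition track_pair :: "nat \<Rightarrow> nat \<Rightarrow> nat \<Rightarrow> nat \<Rightarrow> nat \<times> nat" where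
  "track_pair m x r n = enumerate (track_set m x r) n"

definition xn :: "nat \<Rightarrow> nat \<Rightarrow> nat \<Rightarrow> nat \<Rightarrow> nat" where
  "xn m x r n = fst (track_pair m x r n)"

definition rn :: "nat \<Rightarrow> nat \<Rightarrow> nat \<Rightarrow> nat \<Rightarrow> nat" where
  "rn m x r n = snd (track_pair m x r n)"

fun yseq :: "nat \<Rightarrow> nat \<Rightarrow> nat \<Rightarrow> nat \<Rightarrow> nat" where
  "yseq m x r 0 = (m + 1) * x + r"
| "yseq m x r (Suc n) = ((m + 1) * yseq m x r n) div m"

end

theory Submission
  imports Defs
begin

lemma col_run:
  fixes m x r q s :: nat
  assumes m: "0 < m" and xq: "x \<le> q" and x: "0 < x" and s: "s < m"
    and c: "track_col m x r (q - x) = int (s mod q)"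
  shows "Suc j * m \<le> q + s \<Longrightarrow> track_col m x r (q + Suc j - x) = int (q + s - Suc j * m)"
proof (induction j)
  case 0
  have q: "0 < q" using xq x by simp
  have e: "q + Suc 0 - x = Suc (q - x)" using xq by simp
  have "track_col m x r (q + Suc 0 - x) = (int (s mod q) - int m) mod int q"
    using e c xq by simp
  also have "\<dots> = (int s - int m) mod int q"
    by (metis mod_diff_left_eq of_nat_mod)
  also have "\<dots> = (int q + int s - int m) mod int q"
    by (metis add.commute add_diff_eq mod_add_self2)
  also have "\<dots> = int q + int s - int m"
    using 0 s by (intro mod_pos_pos_trivial) auto
  finally show ?case using 0 by simp
next
  case (Suc j)
  have e: "q + Suc (Suc j) - x = Suc (q - x + Suc j)" using xq by simp
  have e2: "q - x + Suc j = q + Suc j - x" using xq by simp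
  have "track_col m x r (q + Suc (Suc j) - x) = (int (q + s - Suc j * m) - int m) mod int (q + Suc j)"
    using e Suc e2 xq by simp
  also have "\<dots> = int (q + s - Suc j * m) - int m"
  proof (rule mod_pos_pos_trivial)
    have "Suc (Suc j) * m = Suc j * m + m" by simp
    then show "0 \<le> int (q + s - Suc j * m) - int m" using Suc.prems by linarith
    have "Suc (Suc j) * m \<ge> m" by simp
    then show "int (q + s - Suc j * m) - int m < int (q + Suc j)" using Suc.prems s by linarith
  qed
  finally show ?case using Suc.prems by (simp add: of_nat_diff)
qed

definition Inv :: "nat \<Rightarrow> nat \<Rightarrow> nat \<Rightarrow> nat \<times> nat \<Rightarrow> bool" where
  "Inv m x r p = (x \<le> fst p \<and> snd p < m \<and> track_col m x r (fst p - x) = int (snd p mod fst p))"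

definition Step :: "nat \<Rightarrow> nat \<times> nat \<Rightarrow> nat \<times> nat" where
  "Step m p = (if fst p + snd p < m then (fst p, snd p + fst p)
     else (fst p + (fst p + snd p) div m, (fst p + snd p) mod m))"

lemma col_run':
  fixes m x r q s k :: nat
  assumes "0 < m" "0 < x" "Inv m x r (q, s)" "1 \<le> k" "k * m \<le> q + s"
  shows "track_col m x r (q + k - x) = int (q + s - k * m)"
proof -
  obtain j where k: "k = Suc j" using assms(4) by (cases k) auto
  show ?thesis using col_run[of m x q s r j] assms unfolding k Inv_def by auto
qed

lemma step_inv:
  assumes m: "0 < m" and x: "0 < x" and I: "Inv m x r (q, s)"
  shows "Inv m x r (Step m (q, s))"
proof (cases "q + s < m")
  case True
  then show ?thesis using I unfolding Inv_def Step_def by auto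
next
  case False
  define t where "t = (q + s) div m"
  define u where "u = (q + s) mod m"
  have "m div m \<le> (q + s) div m" by (rule div_le_mono) (use False in simp)
  hence t1: "1 \<le> t" using m unfolding t_def by simp
  have qs: "q + s = t * m + u" unfolding t_def u_def by simp
  have tm: "t * m \<le> q + s" using qs by simp
  have s: "s < m" using I unfolding Inv_def by simp
  have "m \<le> t * m" using t1 by simp
  hence uq: "u < q" using qs s by linarith
  have col: "track_col m x r (q + t - x) = int u"
    using col_run'[OF m x I t1 tm] qs by simp
  have um: "u < m" unfolding u_def using m by simp
  have st: "Step m (q, s) = (q + t, u)" using False unfolding Step_def t_def u_def by simp
  show ?thesis using I col um uq unfolding st Inv_def by auto
qed

lemma mod_eq_gap:
  fixes q s c :: nat
  assumes "s < c" "c mod q = s mod q" "0 < q"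
  shows "s + q \<le> c"
proof -
  have "q dvd c - s" using assms by (metis less_or_eq_imp_le mod_eq_dvd_iff_nat)
  moreover have "0 < c - s" using assms by simp
  ultimately have "q \<le> c - s" by (simp add: dvd_imp_le)
  thus ?thesis using assms(1) by linarith
qed

lemma step_gap:
  assumes m: "0 < m" and x: "0 < x" and I: "Inv m x r (q, s)" and J: "Inv m x r (y, c)"
    and l1: "(q, s) < (y, c)" and l2: "(y, c) < Step m (q, s)"
  shows False
proof (cases "q + s < m")
  case True
  have yq: "y = q" and sc: "s < c" and cs: "c < s + q"
    using l1 l2 True unfolding Step_def by (auto simp: less_prod_def)
  have q0: "0 < q" using I x unfolding Inv_def by simp
  have "c mod q = s mod q" using I J yq unfolding Inv_def by simp
  with mod_eq_gap[OF sc this q0] cs show False by simp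
next
  case False
  define t where "t = (q + s) div m"
  define u where "u = (q + s) mod m"
  have "m div m \<le> (q + s) div m" by (rule div_le_mono) (use False in simp)
  hence t1: "1 \<le> t" using m unfolding t_def by simp
  have qs: "q + s = t * m + u" unfolding t_def u_def by simp
  have q0: "0 < q" using I x unfolding Inv_def by simp
  have s: "s < m" using I unfolding Inv_def by simp
  have c: "c < m" using J unfolding Inv_def by simp
  have st: "Step m (q, s) = (q + t, u)" using False unfolding Step_def t_def u_def by simp
  have a1: "q < y \<or> (q = y \<and> s < c)" using l1 by (auto simp: less_prod_def)
  have a2: "y < q + t \<or> (y = q + t \<and> c < u)" using l2 st by (auto simp: less_prod_def)
  consider "y = q \<and> s < c" | "q < y \<and> y < q + t" | "y = q + t \<and> c < u"
    using a1 a2 t1 by linarith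
  then show False
  proof cases
    case 1
    have "c mod q = s mod q" using I J 1 unfolding Inv_def by simp
    with mod_eq_gap[OF _ this q0] 1 False c show False by simp
  next
    case 2
    define k where "k = y - q"
    have k1: "1 \<le> k" and kt: "k < t" and y: "y = q + k" using 2 unfolding k_def by auto
    have "Suc k * m \<le> t * m" using kt by (intro mult_le_mono1) simp
    hence km: "k * m + m \<le> q + s" using qs by simp
    have "track_col m x r (q + k - x) = int (q + s - k * m)"
      using col_run'[OF m x I k1] km by simp
    moreover have "track_col m x r (q + k - x) = int (c mod y)" using J y unfolding Inv_def by simp
    ultimately have "c mod y = q + s - k * m" by simp
    moreover have "c mod y \<le> c" by simp
    ultimately show False using km c by linarith
  next
    case 3
    have "track_col m x r (q + t - x) = int (q + s - t * m)"
      using col_run'[OF m x I t1] qs by simp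
    moreover have "track_col m x r (q + t - x) = int (c mod y)" using J 3 unfolding Inv_def by simp
    ultimately have "c mod y = u" using qs by simp
    moreover have "c mod y \<le> c" by simp
    ultimately show False using 3 by simp
  qed
qed

lemma enumerate_range_strict_mono:
  fixes f :: "nat \<Rightarrow> 'a::wellorder"
  assumes sm: "strict_mono f"
  shows "enumerate (range f) n = f n"
proof -
  have inf: "infinite (range f)"
    using sm strict_mono_imp_inj_on finite_imageD by (metis infinite_UNIV_nat)
  show ?thesis
  proof (induction n)
    case 0
    show ?case unfolding enumerate_0
    proof (rule Least_equality)
      show "f 0 \<in> range f" by simp
      show "\<And>y. y \<in> range f \<Longrightarrow> f 0 \<le> y" using sm by (auto simp: strict_mono_less_eq)
    qed
  next
    case (Suc n)
    show ?case unfolding enumerate_Suc''[OF inf] Suc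
    proof (rule Least_equality)
      show "f (Suc n) \<in> range f \<and> f n < f (Suc n)" using sm by (simp add: strict_mono_def)
      show "\<And>y. y \<in> range f \<and> f n < y \<Longrightarrow> f (Suc n) \<le> y"
        using sm by (auto simp: strict_mono_less strict_mono_less_eq)
    qed
  qed
qed

definition vv :: "nat \<Rightarrow> nat \<times> nat \<Rightarrow> nat" where
  "vv m p = (m + 1) * fst p + snd p"

lemma vv_step:
  assumes m: "0 < m" and s: "snd p < m"
  shows "vv m (Step m p) = vv m p + fst p + (fst p + snd p) div m"
proof (cases "fst p + snd p < m")
  case True
  then show ?thesis unfolding vv_def Step_def by simp
next
  case False
  define t where "t = (fst p + snd p) div m"
  define u where "u = (fst p + snd p) mod m"
  have qs: "fst p + snd p = t * m + u" unfolding t_def u_def by simp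
  have st: "Step m p = (fst p + t, u)" using False unfolding Step_def t_def u_def by simp
  show ?thesis unfolding st vv_def t_def[symmetric] using qs by (simp add: algebra_simps)
qed

lemma vv_f:
  assumes m: "0 < m" and s: "snd p < m"
  shows "(m + 1) * vv m p div m = vv m (Step m p)"
proof -
  define z where "z = vv m p"
  have z: "z = (fst p + snd p) + m * fst p" unfolding z_def vv_def by (simp add: algebra_simps)
  have "(m + 1) * z = z + m * z" by (simp add: algebra_simps)
  hence "(m + 1) * z div m = z div m + z" using m by simp
  also have "z div m = (fst p + snd p) div m + fst p" unfolding z using m by simp
  finally show ?thesis using vv_step[OF m s] unfolding z_def by simp
qed

lemma vv_less_iff:
  fixes q s y c :: nat
  assumes "s \<le> m" "c \<le> m"
  shows "(q, s) < (y, c) \<longleftrightarrow> vv m (q, s) < vv m (y, c)"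
proof -
  have A: "(m + 1) * a + b < (m + 1) * a' + b'" if "a < a'" "b \<le> m" for a a' b b' :: nat
  proof -
    have "(m + 1) * (a + 1) \<le> (m + 1) * a'" using that by (intro mult_le_mono2) simp
    thus ?thesis using that by (simp add: algebra_simps)
  qed
  have B: "(m + 1) * q + s < (m + 1) * y + c \<longleftrightarrow> s < c" if "q = y" using that by simp
  show ?thesis
  proof (cases q y rule: linorder_cases)
    case less thus ?thesis using A[of q y s c] assms by (simp add: less_prod_def vv_def)
  next
    case equal thus ?thesis using B by (simp add: less_prod_def vv_def)
  next
    case greater thus ?thesis using A[of y q c s] assms by (auto simp add: less_prod_def vv_def)
  qed
qed

definition QQ :: "nat \<Rightarrow> nat \<Rightarrow> nat \<Rightarrow> nat \<Rightarrow> nat \<times> nat" where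
  "QQ m x r n = (Step m ^^ n) (x, r)"

lemma QQ_Suc: "QQ m x r (Suc n) = Step m (QQ m x r n)"
  unfolding QQ_def by simp

lemma QQ_inv:
  assumes m: "0 < m" and x: "0 < x" and r: "r < m"
  shows "Inv m x r (QQ m x r n)"
proof (induction n)
  case 0
  then show ?case using r unfolding QQ_def Inv_def by simp
next
  case (Suc n)
  then show ?case using step_inv[OF m x, of r "fst (QQ m x r n)" "snd (QQ m x r n)"]
    by (simp add: QQ_Suc)
qed

lemma QQ_yseq:
  assumes m: "0 < m" and x: "0 < x" and r: "r < m"
  shows "yseq m x r n = vv m (QQ m x r n)"
proof (induction n)
  case 0
  then show ?case unfolding QQ_def vv_def by simp
next
  case (Suc n)
  have "snd (QQ m x r n) < m" using QQ_inv[OF m x r, of n] unfolding Inv_def by simp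
  then show ?case using Suc vv_f[OF m] by (simp add: QQ_Suc)
qed

lemma vv_incr:
  assumes m: "0 < m" and x: "0 < x" and r: "r < m"
  shows "vv m (QQ m x r n) < vv m (QQ m x r (Suc n))"
proof -
  have I: "Inv m x r (QQ m x r n)" by (rule QQ_inv[OF m x r])
  hence "snd (QQ m x r n) < m" "x \<le> fst (QQ m x r n)" unfolding Inv_def by auto
  thus ?thesis using vv_step[OF m] x by (simp add: QQ_Suc)
qed

lemma QQ_mono:
  assumes m: "0 < m" and x: "0 < x" and r: "r < m"
  shows "strict_mono (QQ m x r)"
proof (rule strict_mono_Suc_iff[THEN iffD2], intro allI)
  fix n
  have I: "Inv m x r (QQ m x r n)" "Inv m x r (QQ m x r (Suc n))" by (rule QQ_inv[OF m x r])+
  obtain a b where ab: "QQ m x r n = (a, b)" by (cases "QQ m x r n")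
  obtain a' b' where ab': "QQ m x r (Suc n) = (a', b')" by (cases "QQ m x r (Suc n)")
  show "QQ m x r n < QQ m x r (Suc n)"
    using vv_incr[OF m x r, of n] I vv_less_iff[of b m b' a a'] unfolding ab ab' Inv_def by simp
qed

lemma vv_ge:
  assumes m: "0 < m" and x: "0 < x" and r: "r < m"
  shows "n \<le> vv m (QQ m x r n)"
proof (induction n)
  case (Suc n)
  then show ?case using vv_incr[OF m x r, of n] by simp
qed simp

lemma track_set_eq:
  assumes m: "0 < m" and x: "0 < x" and r: "r < m"
  shows "track_set m x r = range (QQ m x r)"
proof
  have sm: "strict_mono (QQ m x r)" by (rule QQ_mono[OF m x r])
  show "range (QQ m x r) \<subseteq> track_set m x r"
  proof
    fix p assume "p \<in> range (QQ m x r)"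
    then obtain n where p: "p = QQ m x r n" by auto
    have I: "Inv m x r p" using QQ_inv[OF m x r] p by simp
    have "QQ m x r 0 \<le> QQ m x r n" using sm by (simp add: strict_mono_less_eq)
    hence "(x, r) \<le> p" using p by (simp add: QQ_def)
    with I show "p \<in> track_set m x r" unfolding track_set_def Inv_def by (cases p) auto
  qed
  show "track_set m x r \<subseteq> range (QQ m x r)"
  proof
    fix p assume pS: "p \<in> track_set m x r"
    obtain y c where p: "p = (y, c)" by (cases p)
    have J: "Inv m x r (y, c)" and xr: "(x, r) \<le> (y, c)"
      using pS unfolding p track_set_def Inv_def by auto
    have c: "c < m" using J unfolding Inv_def by simp
    have ex: "\<exists>n. (y, c) < QQ m x r n"
    proof -
      define n where "n = Suc (vv m (y, c))"
      obtain a b where ab: "QQ m x r n = (a, b)" by (cases "QQ m x r n")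
      have "b < m" using QQ_inv[OF m x r, of n] ab unfolding Inv_def by simp
      moreover have "vv m (y, c) < vv m (a, b)" using vv_ge[OF m x r, of n] ab unfolding n_def by simp
      ultimately have "(y, c) < (a, b)" using vv_less_iff[of c m b y a] c by simp
      thus ?thesis using ab by metis
    qed
    define N where "N = (LEAST n. (y, c) < QQ m x r n)"
    have N: "(y, c) < QQ m x r N" unfolding N_def using ex by (rule LeastI_ex)
    have N0: "N \<noteq> 0"
    proof
      assume "N = 0"
      with N have "(y, c) < (x, r)" by (simp add: QQ_def)
      with xr show False by (auto simp: less_prod_def less_eq_prod_def)
    qed
    then obtain k where k: "N = Suc k" by (cases N) auto
    have "\<not> (y, c) < QQ m x r k" using k unfolding N_def
      by (metis Suc_n_not_le_n Least_le)
    hence le: "QQ m x r k \<le> (y, c)" by simp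
    show "p \<in> range (QQ m x r)"
    proof (cases "QQ m x r k = (y, c)")
      case True
      thus ?thesis unfolding p by (metis rangeI)
    next
      case False
      hence lt: "QQ m x r k < (y, c)" using le by simp
      obtain a b where ab: "QQ m x r k = (a, b)" by (cases "QQ m x r k")
      have I: "Inv m x r (a, b)" using QQ_inv[OF m x r, of k] ab by simp
      have "(y, c) < Step m (a, b)" using N k ab by (simp add: QQ_Suc)
      with step_gap[OF m x I J] lt ab show ?thesis by simp
    qed
  qed
qed

theorem mainTheorem5:
  fixes m x r n :: nat
  assumes "0 < m" and "0 < x" and "r < m"
  shows "yseq m x r n div (m + 1) = xn m x r n \<and> yseq m x r n mod (m + 1) = rn m x r n"
proof -
  have tp: "track_pair m x r n = QQ m x r n"
    unfolding track_pair_def track_set_eq[OF assms]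
    by (rule enumerate_range_strict_mono[OF QQ_mono[OF assms]])
  obtain a b where ab: "QQ m x r n = (a, b)" by (cases "QQ m x r n")
  have "b < m" using QQ_inv[OF assms, of n] ab unfolding Inv_def by simp
  hence b: "b < m + 1" by simp
  have y: "yseq m x r n = b + a * (m + 1)"
    using QQ_yseq[OF assms, of n] ab unfolding vv_def by (simp add: algebra_simps)
  have d: "(b + a * (m + 1)) div (m + 1) = a" using b by (simp only: div_mult_self1) simp
  have md: "(b + a * (m + 1)) mod (m + 1) = b" using b by (simp only: mod_mult_self1) simp
  show ?thesis unfolding xn_def rn_def tp ab y d md by simp
qed

end
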